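(* Let $(\mathfrak{A},\mathfrak{A}_0)$ be a CQ*-algebra as in the context and $X\in\mathfrak{A}$. Then $Eig(X)\subset\sigma^L_{\mathfrak{A}_0}(X)\subset\sigma_{\mathfrak{A}_0}(X)$.
   Context: Let $\mathfrak{A}_0$ be a unital C*-algebra with C*-norm $\|\cdot\|_0$ and unit $I$, and let $\|\cdot\|$ be another norm on $\mathfrak{A}_0$ with $\|A\|\le\|A\|_0$, $\|AB\|\le\|A\|\,\|B\|_0$, $\|A^*\|=\|A\|$. Let $\mathfrak{A}$ be the $\|\cdot\|$-completion of $\mathfrak{A}_0$; for $X\in\mathfrak{A}$, $A\in\mathfrak{A}_0$ and $A_n\to X$ in $\|\cdot\|$ ($A_n\in\mathfrak{A}_0$), $XA:=\lim A_nA$, $AX:=\lim AA_n$. $E(\mathfrak{A}_0)$ is the set of positive linear functionals $\omega$ on $\mathfrak{A}_0$ with $\omega(I)=1$ and $|\omega(A)|\le\gamma\|A\|$ for some $\gamma>0$; $\overline{\omega}$ is the continuous extension to $\mathfrak{A}$. $Eig(X)$ is the set of $\alpha\in\mathbb{C}$ for which there exists $\omega\in E(\mathfrak{A}_0)$ with $\overline{\omega}(AX)=\alpha\,\overline{\omega}(A)$ for all $A\in\mathfrak{A}_0$. $\sigma^L_{\mathfrak{A}_0}(X)$ (resp. $\sigma^R_{\mathfrak{A}_0}(X)$) is the set of $\alpha\in\mathbb{C}$ such that there is no $B\in\mathfrak{A}_0$ with $B(X-\alpha I)=I$ (resp. $(X-\alpha I)B=I$), and $\sigma_{\mathfrak{A}_0}(X)=\sigma^L_{\mathfrak{A}_0}(X)\cup\sigma^R_{\mathfrak{A}_0}(X)$.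 *)

theory Defs
  imports "HOL-Analysis.Analysis"
begin

class complex_vector = real_vector +
  fixes scaleC :: "complex \<Rightarrow> 'a \<Rightarrow> 'a" (infixr "*\<^sub>C" 75)
  assumes scaleC_add_right: "c *\<^sub>C (x + y) = c *\<^sub>C x + c *\<^sub>C y"
    and scaleC_add_left: "(c + d) *\<^sub>C x = c *\<^sub>C x + d *\<^sub>C x"
    and scaleC_scaleC: "c *\<^sub>C (d *\<^sub>C x) = (c * d) *\<^sub>C x"
    and scaleC_one: "1 *\<^sub>C x = x"
    and scaleR_scaleC: "scaleR r x = complex_of_real r *\<^sub>C x"

class complex_normed_vector = complex_vector + real_normed_vector +
  assumes norm_scaleC: "norm (c *\<^sub>C x) = cmod c * norm x"

class complex_normed_algebra_1 = complex_normed_vector + real_normed_algebra_1 +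
  assumes scaleC_mult_left: "(c *\<^sub>C x) * y = c *\<^sub>C (x * y)"
    and scaleC_mult_right: "x * (c *\<^sub>C y) = c *\<^sub>C (x * y)"

class cstar_algebra = complex_normed_algebra_1 + banach +
  fixes cstar :: "'a \<Rightarrow> 'a"
  assumes cstar_cstar: "cstar (cstar x) = x"
    and cstar_add: "cstar (x + y) = cstar x + cstar y"
    and cstar_scaleC: "cstar (c *\<^sub>C x) = cnj c *\<^sub>C cstar x"
    and cstar_mult: "cstar (x * y) = cstar y * cstar x"
    and cstar_identity: "norm (cstar x * x) = (norm x)\<^sup>2"

text \<open>The C*-norm of A0 is the type norm of 'a.  The second norm is nrm.  The completion
  of (A0, nrm) is modelled by an arbitrary Banach space 'b with a complex-linear map
  j :: 'a => 'b such that norm (j A) = nrm A and j has dense range.\<close>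

definition is_norm :: "('a::complex_vector \<Rightarrow> real) \<Rightarrow> bool" where
  "is_norm nrm \<longleftrightarrow> (\<forall>x. 0 \<le> nrm x) \<and> (\<forall>x. nrm x = 0 \<longrightarrow> x = 0)
     \<and> (\<forall>x y. nrm (x + y) \<le> nrm x + nrm y) \<and> (\<forall>c x. nrm (c *\<^sub>C x) = cmod c * nrm x)"

definition cq_setting ::
  "('a::cstar_algebra \<Rightarrow> real) \<Rightarrow> ('a \<Rightarrow> 'b::{complex_normed_vector,banach}) \<Rightarrow> bool" where
  "cq_setting nrm j \<longleftrightarrow> is_norm nrm
     \<and> (\<forall>A. nrm A \<le> norm A)
     \<and> (\<forall>A B. nrm (A * B) \<le> nrm A * norm B)
     \<and> (\<forall>A. nrm (cstar A) = nrm A)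
     \<and> (\<forall>A B. j (A + B) = j A + j B)
     \<and> (\<forall>c A. j (c *\<^sub>C A) = c *\<^sub>C j A)
     \<and> (\<forall>A. norm (j A) = nrm A)
     \<and> closure (range j) = UNIV"

text \<open>A X := lim A A_n and X A := lim A_n A, where j A_n \<rightarrow> X.\<close>
definition lmult :: "('a::cstar_algebra \<Rightarrow> 'b::{complex_normed_vector,banach}) \<Rightarrow> 'a \<Rightarrow> 'b \<Rightarrow> 'b" where
  "lmult j A X = (THE Y. \<forall>An. (\<lambda>k. j (An k)) \<longlonglongrightarrow> X \<longrightarrow> (\<lambda>k. j (A * An k)) \<longlonglongrightarrow> Y)"

definition rmult :: "('a::cstar_algebra \<Rightarrow> 'b::{complex_normed_vector,banach}) \<Rightarrow> 'b \<Rightarrow> 'a \<Rightarrow> 'b" where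
  "rmult j X A = (THE Y. \<forall>An. (\<lambda>k. j (An k)) \<longlonglongrightarrow> X \<longrightarrow> (\<lambda>k. j (An k * A)) \<longlonglongrightarrow> Y)"

definition ext_fun :: "('a::cstar_algebra \<Rightarrow> 'b::{complex_normed_vector,banach}) \<Rightarrow> ('a \<Rightarrow> complex) \<Rightarrow> 'b \<Rightarrow> complex" where
  "ext_fun j \<omega> = (THE f. continuous_on UNIV f \<and> (\<forall>A. f (j A) = \<omega> A))"

definition positive_functional :: "('a::cstar_algebra \<Rightarrow> complex) \<Rightarrow> bool" where
  "positive_functional \<omega> \<longleftrightarrow> (\<forall>A B. \<omega> (A + B) = \<omega> A + \<omega> B)
     \<and> (\<forall>c A. \<omega> (c *\<^sub>C A) = c * \<omega> A)
     \<and> (\<forall>A. \<omega> (cstar A * A) \<in> \<real> \<and> 0 \<le> Re (\<omega> (cstar A * A)))"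

definition E_states :: "('a::cstar_algebra \<Rightarrow> real) \<Rightarrow> ('a \<Rightarrow> complex) set" where
  "E_states nrm = {\<omega>. positive_functional \<omega> \<and> \<omega> 1 = 1
      \<and> (\<exists>\<gamma>>0. \<forall>A. cmod (\<omega> A) \<le> \<gamma> * nrm A)}"

definition Eig :: "('a::cstar_algebra \<Rightarrow> real) \<Rightarrow> ('a \<Rightarrow> 'b::{complex_normed_vector,banach}) \<Rightarrow> 'b \<Rightarrow> complex set" where
  "Eig nrm j X = {\<alpha>. \<exists>\<omega>\<in>E_states nrm.
      \<forall>A. ext_fun j \<omega> (lmult j A X) = \<alpha> * ext_fun j \<omega> (j A)}"

definition specL :: "('a::cstar_algebra \<Rightarrow> 'b::{complex_normed_vector,banach}) \<Rightarrow> 'b \<Rightarrow> complex set" where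
  "specL j X = {\<alpha>. \<not> (\<exists>B. lmult j B (X - \<alpha> *\<^sub>C j 1) = j 1)}"

definition specR :: "('a::cstar_algebra \<Rightarrow> 'b::{complex_normed_vector,banach}) \<Rightarrow> 'b \<Rightarrow> complex set" where
  "specR j X = {\<alpha>. \<not> (\<exists>B. rmult j (X - \<alpha> *\<^sub>C j 1) B = j 1)}"

definition spec :: "('a::cstar_algebra \<Rightarrow> 'b::{complex_normed_vector,banach}) \<Rightarrow> 'b \<Rightarrow> complex set" where
  "spec j X = specL j X \<union> specR j X"

end

theory Submission
  imports Defs
begin

lemma ext_exists:
  fixes j :: "'a \<Rightarrow> 'b::metric_space" and f :: "'a \<Rightarrow> 'c::complete_space"
  assumes dense: "closure (range j) = UNIV" and K: "K \<ge> 0"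
    and lip: "\<And>A B. dist (f A) (f B) \<le> K * dist (j A) (j B)"
  shows "\<exists>g. continuous_on UNIV g \<and> (\<forall>A. g (j A) = f A) \<and>
     (\<forall>h. continuous_on UNIV h \<and> (\<forall>A. h (j A) = f A) \<longrightarrow> h = g)"
proof -
  define F where "F y = f (SOME A. j A = y)" for y
  have FjA: "F (j A) = f A" for A
  proof -
    have "j (SOME B. j B = j A) = j A" by (rule someI) simp
    then have "dist (F (j A)) (f A) \<le> 0" unfolding F_def using lip[of "SOME B. j B = j A" A] by simp
    then show ?thesis by simp
  qed
  have "lipschitz_on K (range j) F"
    unfolding lipschitz_on_def using K lip FjA by auto
  then have uc: "uniformly_continuous_on (range j) F"
    by (rule lipschitz_on_uniformly_continuous)
  obtain g where g1: "uniformly_continuous_on (closure (range j)) g"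
    and g2: "\<And>x. x \<in> range j \<Longrightarrow> F x = g x"
    and g3: "\<And>Y h x. range j \<subseteq> Y \<Longrightarrow> Y \<subseteq> closure (range j) \<Longrightarrow> continuous_on Y h \<Longrightarrow>
       (\<And>x. x \<in> range j \<Longrightarrow> F x = h x) \<Longrightarrow> x \<in> Y \<Longrightarrow> h x = g x"
    using uniformly_continuous_on_extension_on_closure[OF uc] by blast
  have "continuous_on UNIV g" using uniformly_continuous_imp_continuous[OF g1] unfolding dense .
  moreover have "\<forall>A. g (j A) = f A" using g2 FjA by simp
  moreover have "\<forall>h. continuous_on UNIV h \<and> (\<forall>A. h (j A) = f A) \<longrightarrow> h = g"
  proof (intro allI impI)
    fix h :: "'b \<Rightarrow> 'c" assume h: "continuous_on UNIV h \<and> (\<forall>A. h (j A) = f A)"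
    show "h = g"
    proof
      fix x
      show "h x = g x"
        by (rule g3[of UNIV]) (use h dense FjA in auto)
    qed
  qed
  ultimately show ?thesis by blast
qed

lemma cont_seq:
  fixes g :: "'a::metric_space \<Rightarrow> 'b::metric_space"
  assumes "continuous_on UNIV g" "s \<longlonglongrightarrow> x"
  shows "(\<lambda>k. g (s k)) \<longlonglongrightarrow> g x"
proof -
  have "isCont g x" using assms(1) continuous_on_eq_continuous_at by blast
  then show ?thesis using assms(2) isCont_tendsto_compose by blast
qed

lemma j_diff:
  assumes "cq_setting nrm j"
  shows "j (A - B) = j A - j B"
proof -
  have "j (A - B + B) = j (A - B) + j B" using assms unfolding cq_setting_def by blast
  then show ?thesis by (simp add: algebra_simps)
qed

lemma lmult_prop:
  fixes nrm :: "'a::cstar_algebra \<Rightarrow> real"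
    and j :: "'a \<Rightarrow> 'b::{complex_normed_vector,banach}"
  assumes cq: "cq_setting nrm j" and An: "(\<lambda>k. j (An k)) \<longlonglongrightarrow> X"
  shows "(\<lambda>k. j (B * An k)) \<longlonglongrightarrow> lmult j B X"
proof -
  have lip: "dist (j (B * A)) (j (B * A')) \<le> norm (cstar B) * dist (j A) (j A')" for A A'
  proof -
    have e1: "j (B * (A - A')) = j (B * A) - j (B * A')"
      by (simp add: right_diff_distrib j_diff[OF cq])
    have "dist (j (B * A)) (j (B * A')) = norm (j (B * (A - A')))"
      by (simp add: dist_norm e1)
    also have "\<dots> = nrm (B * (A - A'))"
      using cq unfolding cq_setting_def by blast
    also have "\<dots> = nrm (cstar (B * (A - A')))"
      using cq unfolding cq_setting_def by simp
    also have "\<dots> = nrm (cstar (A - A') * cstar B)"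
      by (simp only: cstar_mult)
    also have "\<dots> \<le> nrm (cstar (A - A')) * norm (cstar B)"
      using cq unfolding cq_setting_def by blast
    also have "\<dots> = norm (cstar B) * norm (j (A - A'))"
      using cq unfolding cq_setting_def by simp
    also have "\<dots> = norm (cstar B) * dist (j A) (j A')"
      by (simp add: dist_norm j_diff[OF cq])
    finally show ?thesis .
  qed
  have dense: "closure (range j) = UNIV" using cq unfolding cq_setting_def by blast
  obtain g where g: "continuous_on UNIV g" "\<forall>A. g (j A) = j (B * A)"
    using ext_exists[OF dense _ lip] by auto
  have P: "(\<lambda>k. j (B * Cn k)) \<longlonglongrightarrow> g X" if "(\<lambda>k. j (Cn k)) \<longlonglongrightarrow> X" for Cn
    using cont_seq[OF g(1) that] g(2) by simp
  have "lmult j B X = g X"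
    unfolding lmult_def
  proof (rule the_equality)
    show "\<forall>Cn. (\<lambda>k. j (Cn k)) \<longlonglongrightarrow> X \<longrightarrow> (\<lambda>k. j (B * Cn k)) \<longlonglongrightarrow> g X" using P by blast
  next
    fix Y assume "\<forall>Cn. (\<lambda>k. j (Cn k)) \<longlonglongrightarrow> X \<longrightarrow> (\<lambda>k. j (B * Cn k)) \<longlonglongrightarrow> Y"
    then have "(\<lambda>k. j (B * An k)) \<longlonglongrightarrow> Y" using An by blast
    then show "Y = g X" using P[OF An] LIMSEQ_unique by blast
  qed
  then show ?thesis using P[OF An] by simp
qed

lemma ext_fun_prop:
  fixes nrm :: "'a::cstar_algebra \<Rightarrow> real"
    and j :: "'a \<Rightarrow> 'b::{complex_normed_vector,banach}"
  assumes cq: "cq_setting nrm j" and om: "\<omega> \<in> E_states nrm"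
  shows "continuous_on UNIV (ext_fun j \<omega>) \<and> (\<forall>A. ext_fun j \<omega> (j A) = \<omega> A)"
proof -
  obtain \<gamma> where ga: "\<gamma> > 0" "\<forall>A. cmod (\<omega> A) \<le> \<gamma> * nrm A"
    using om unfolding E_states_def by blast
  have add: "\<omega> (A + B) = \<omega> A + \<omega> B" for A B
    using om unfolding E_states_def positive_functional_def by blast
  have diff: "\<omega> (A - B) = \<omega> A - \<omega> B" for A B
    using add[of "A - B" B] by (simp add: algebra_simps)
  have lip: "dist (\<omega> A) (\<omega> B) \<le> \<gamma> * dist (j A) (j B)" for A B
  proof -
    have "norm (j (A - B)) = nrm (A - B)" using cq unfolding cq_setting_def by blast
    then have "dist (j A) (j B) = nrm (A - B)" by (simp add: dist_norm j_diff[OF cq])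
    moreover have "dist (\<omega> A) (\<omega> B) = cmod (\<omega> (A - B))" by (simp add: dist_norm diff)
    ultimately show ?thesis using ga(2) by simp
  qed
  have dense: "closure (range j) = UNIV" using cq unfolding cq_setting_def by blast
  obtain g where g: "continuous_on UNIV g" "\<forall>A. g (j A) = \<omega> A"
    "\<forall>h. continuous_on UNIV h \<and> (\<forall>A. h (j A) = \<omega> A) \<longrightarrow> h = g"
    using ext_exists[OF dense less_imp_le[OF ga(1)] lip] by blast
  have "ext_fun j \<omega> = g"
    unfolding ext_fun_def
  proof (rule the_equality)
    show "continuous_on UNIV g \<and> (\<forall>A. g (j A) = \<omega> A)" using g(1) g(2) by blast
  next
    fix h assume "continuous_on UNIV h \<and> (\<forall>A. h (j A) = \<omega> A)"
    then show "h = g" using g(3) by blast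
  qed
  then show ?thesis using g(1) g(2) by simp
qed

theorem lemma4p4:
  fixes nrm :: "'a::cstar_algebra \<Rightarrow> real"
    and j :: "'a \<Rightarrow> 'b::{complex_normed_vector,banach}"
    and X :: 'b
  assumes "cq_setting nrm j"
  shows "Eig nrm j X \<subseteq> specL j X \<and> specL j X \<subseteq> spec j X"
proof
  show "specL j X \<subseteq> spec j X" unfolding spec_def by blast
  show "Eig nrm j X \<subseteq> specL j X"
  proof
    fix \<alpha> assume "\<alpha> \<in> Eig nrm j X"
    then obtain \<omega> where om: "\<omega> \<in> E_states nrm"
      and H: "\<forall>A. ext_fun j \<omega> (lmult j A X) = \<alpha> * ext_fun j \<omega> (j A)"
      unfolding Eig_def by blast
    show "\<alpha> \<in> specL j X"
    proof (unfold specL_def, rule CollectI, rule notI)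
      assume "\<exists>B. lmult j B (X - \<alpha> *\<^sub>C j 1) = j 1"
      then obtain B where B: "lmult j B (X - \<alpha> *\<^sub>C j 1) = j 1" by blast
      define g where "g = ext_fun j \<omega>"
      have g: "continuous_on UNIV g" "\<And>A. g (j A) = \<omega> A"
        using ext_fun_prop[OF assms om] unfolding g_def by auto
      have add: "\<omega> (A + C) = \<omega> A + \<omega> C" for A C
        using om unfolding E_states_def positive_functional_def by blast
      have sc: "\<omega> (c *\<^sub>C A) = c * \<omega> A" for c A
        using om unfolding E_states_def positive_functional_def by blast
      have diff: "\<omega> (A - C) = \<omega> A - \<omega> C" for A C
        using add[of "A - C" C] by (simp add: algebra_simps)
      have om1: "\<omega> 1 = 1" using om unfolding E_states_def by blast
      have "X \<in> closure (range j)" using assms unfolding cq_setting_def by blast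
      then obtain s where s: "\<And>n. s n \<in> range j" "s \<longlonglongrightarrow> X"
        by (auto simp: closure_sequential)
      define An where "An n = (SOME A. j A = s n)" for n
      have jAn: "j (An n) = s n" for n unfolding An_def using s(1)[of n] by (auto intro: someI)
      have c1: "(\<lambda>k. j (An k)) \<longlonglongrightarrow> X" using s(2) jAn by simp
      have jsc: "j (c *\<^sub>C A) = c *\<^sub>C j A" for c A using assms unfolding cq_setting_def by blast
      have "(\<lambda>k. j (An k) - \<alpha> *\<^sub>C j 1) \<longlonglongrightarrow> X - \<alpha> *\<^sub>C j 1"
        by (intro tendsto_intros c1)
      then have c2: "(\<lambda>k. j (An k - \<alpha> *\<^sub>C 1)) \<longlonglongrightarrow> X - \<alpha> *\<^sub>C j 1"
        using j_diff[OF assms] jsc by simp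
      have l1: "(\<lambda>k. j (B * An k)) \<longlonglongrightarrow> lmult j B X" by (rule lmult_prop[OF assms c1])
      have l2: "(\<lambda>k. j (B * (An k - \<alpha> *\<^sub>C 1))) \<longlonglongrightarrow> j 1"
        using lmult_prop[OF assms c2, of B] B by simp
      have m1: "(\<lambda>k. \<omega> (B * An k)) \<longlonglongrightarrow> \<alpha> * \<omega> B"
        using cont_seq[OF g(1) l1] g(2) H unfolding g_def by simp
      have m2: "(\<lambda>k. \<omega> (B * (An k - \<alpha> *\<^sub>C 1))) \<longlonglongrightarrow> 1"
        using cont_seq[OF g(1) l2] g(2) om1 by simp
      have eq: "\<omega> (B * (An k - \<alpha> *\<^sub>C 1)) = \<omega> (B * An k) - \<alpha> * \<omega> B" for k
        by (simp add: right_diff_distrib scaleC_mult_right diff sc)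
      have "(\<lambda>k. \<omega> (B * (An k - \<alpha> *\<^sub>C 1))) \<longlonglongrightarrow> \<alpha> * \<omega> B - \<alpha> * \<omega> B"
        unfolding eq by (intro tendsto_intros m1)
      then have "(1::complex) = \<alpha> * \<omega> B - \<alpha> * \<omega> B" using m2 by (rule LIMSEQ_unique[rotated])
      then show False by simp
    qed
  qed
qed

end
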